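(* Let $k\geq 2$ be an integer. If $G$ is a cactus on $n$ vertices, then $\alpha_k(G)\geq \Big\lfloor\frac{k}{k+1}\,n\Big\rfloor+1$.
   Context: All graphs are finite and simple, with nonempty vertex set. For a graph $G$, a $k$-sparse set is a set of vertices inducing a subgraph of maximum degree at most $k$, and $\alpha_k(G)$ denotes the maximum size of a $k$-sparse set in $G$. A cactus is a graph (not necessarily connected) in which every block is a cycle, a single edge, or a single vertex. *)

theory Defs
  imports Main
begin

definition graph :: "'a set \<Rightarrow> 'a set set \<Rightarrow> bool" where
  "graph V E \<longleftrightarrow> finite V \<and> V \<noteq> {} \<and> (\<forall>e\<in>E. e \<subseteq> V \<and> card e = 2)"

definition subgraph :: "'a set \<Rightarrow> 'a set set \<Rightarrow> 'a set \<Rightarrow> 'a set set \<Rightarrow> bool" where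
  "subgraph W F V E \<longleftrightarrow> W \<subseteq> V \<and> F \<subseteq> E \<and> (\<forall>e\<in>F. e \<subseteq> W)"

definition connected_graph :: "'a set \<Rightarrow> 'a set set \<Rightarrow> bool" where
  "connected_graph W F \<longleftrightarrow>
     (\<forall>u\<in>W. \<forall>v\<in>W. (\<lambda>x y. {x, y} \<in> F)\<^sup>*\<^sup>* u v)"

definition del_vertex_edges :: "'a \<Rightarrow> 'a set set \<Rightarrow> 'a set set" where
  "del_vertex_edges v F = {e\<in>F. v \<notin> e}"

definition nonseparable :: "'a set \<Rightarrow> 'a set set \<Rightarrow> bool" where
  "nonseparable W F \<longleftrightarrow> W \<noteq> {} \<and> connected_graph W F \<and>
     (\<forall>v\<in>W. connected_graph (W - {v}) (del_vertex_edges v F))"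

definition block :: "'a set \<Rightarrow> 'a set set \<Rightarrow> 'a set \<Rightarrow> 'a set set \<Rightarrow> bool" where
  "block W F V E \<longleftrightarrow> subgraph W F V E \<and> nonseparable W F \<and>
     (\<forall>W' F'. subgraph W' F' V E \<and> nonseparable W' F' \<and> W \<subseteq> W' \<and> F \<subseteq> F'
        \<longrightarrow> W' = W \<and> F' = F)"

definition degree :: "'a set set \<Rightarrow> 'a \<Rightarrow> nat" where
  "degree F v = card {u. {v, u} \<in> F}"

definition is_cycle_graph :: "'a set \<Rightarrow> 'a set set \<Rightarrow> bool" where
  "is_cycle_graph W F \<longleftrightarrow> card W \<ge> 3 \<and> connected_graph W F \<and> (\<forall>v\<in>W. degree F v = 2)"

definition is_single_edge :: "'a set \<Rightarrow> 'a set set \<Rightarrow> bool" where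
  "is_single_edge W F \<longleftrightarrow> card W = 2 \<and> F = {W}"

definition is_single_vertex :: "'a set \<Rightarrow> 'a set set \<Rightarrow> bool" where
  "is_single_vertex W F \<longleftrightarrow> card W = 1 \<and> F = {}"

definition cactus :: "'a set \<Rightarrow> 'a set set \<Rightarrow> bool" where
  "cactus V E \<longleftrightarrow> graph V E \<and>
     (\<forall>W F. block W F V E \<longrightarrow>
        is_cycle_graph W F \<or> is_single_edge W F \<or> is_single_vertex W F)"

definition k_sparse :: "nat \<Rightarrow> 'a set \<Rightarrow> 'a set set \<Rightarrow> 'a set \<Rightarrow> bool" where
  "k_sparse k V E S \<longleftrightarrow> S \<subseteq> V \<and> (\<forall>v\<in>S. card {u\<in>S. {v, u} \<in> E} \<le> k)"

definition alpha_k :: "nat \<Rightarrow> 'a set \<Rightarrow> 'a set set \<Rightarrow> nat" where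
  "alpha_k k V E = Max (card ` {S. k_sparse k V E S})"

end

theory Submission
  imports Defs
begin


definition rch :: "'a set set \<Rightarrow> 'a set \<Rightarrow> 'a \<Rightarrow> 'a \<Rightarrow> bool" where
  "rch E A = (\<lambda>p q. p \<in> A \<and> q \<in> A \<and> {p,q} \<in> E)\<^sup>*\<^sup>*"

definition cn :: "'a set set \<Rightarrow> 'a set \<Rightarrow> bool" where
  "cn E A \<longleftrightarrow> (\<forall>u\<in>A. \<forall>w\<in>A. rch E A u w)"

lemma rch_refl[simp]: "rch E A u u"
  by (simp add: rch_def)

lemma rch_trans: "rch E A u v \<Longrightarrow> rch E A v w \<Longrightarrow> rch E A u w"
  unfolding rch_def by (rule rtranclp_trans)

lemma rch_edge: "u \<in> A \<Longrightarrow> w \<in> A \<Longrightarrow> {u,w} \<in> E \<Longrightarrow> rch E A u w"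
  unfolding rch_def by (rule r_into_rtranclp) simp

lemma rch_sym: "rch E A u w \<Longrightarrow> rch E A w u"
  unfolding rch_def
proof (induction rule: rtranclp_induct)
  case base then show ?case by simp
next
  case (step y z)
  have "{z, y} = {y, z}" by (rule insert_commute)
  then have "z \<in> A \<and> y \<in> A \<and> {z, y} \<in> E" using step(2) by simp
  then show ?case
    by (rule converse_rtranclp_into_rtranclp[of "\<lambda>p q. p \<in> A \<and> q \<in> A \<and> {p, q} \<in> E", OF _ step(3)])
qed

lemma rch_mem: "rch E A u w \<Longrightarrow> u \<in> A \<Longrightarrow> w \<in> A"
  unfolding rch_def by (induction rule: rtranclp_induct) auto

lemma rch_mem2: "rch E A u w \<Longrightarrow> u \<noteq> w \<Longrightarrow> u \<in> A \<and> w \<in> A"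
  unfolding rch_def
proof (induction rule: rtranclp_induct)
  case base then show ?case by simp
next
  case (step y z)
  then show ?case by (cases "u = y") auto
qed

lemma rch_mono:
  assumes "A \<subseteq> B" "rch E A u w" shows "rch E B u w"
  using assms(2) unfolding rch_def
proof (induction rule: rtranclp_induct)
  case base then show ?case by simp
next
  case (step y z)
  show ?case
    by (rule rtranclp.rtrancl_into_rtrancl[OF step(3)]) (use step(2) assms(1) in auto)
qed

lemma rch_restrict:
  assumes "rch E A u w" "\<And>s. rch E A u s \<Longrightarrow> s \<in> B"
  shows "rch E B u w"
proof -
  from assms(1) have "(\<lambda>p q. p \<in> A \<and> q \<in> A \<and> {p,q} \<in> E)\<^sup>*\<^sup>* u w" by (simp only: rch_def)
  then show ?thesis
  proof (induction rule: rtranclp_induct)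
    case base show ?case by simp
  next
    case (step y z)
    have ay: "rch E A u y" using step(1) by (simp only: rch_def)
    have az: "rch E A u z" unfolding rch_def by (rule rtranclp.rtrancl_into_rtrancl[OF step(1,2)])
    have yB: "y \<in> B" using assms(2)[OF ay] .
    have zB: "z \<in> B" using assms(2)[OF az] .
    have "{y,z} \<in> E" using step(2) by simp
    then have "rch E B y z" using yB zB by (intro rch_edge)
    then show ?case using rch_trans[OF step(3)] by blast
  qed
qed

lemma cn_hub:
  assumes "\<And>u. u \<in> A \<Longrightarrow> rch E A u h"
  shows "cn E A"
  unfolding cn_def
proof (intro ballI)
  fix u w assume "u \<in> A" "w \<in> A"
  show "rch E A u w" using rch_trans[OF assms[OF \<open>u \<in> A\<close>] rch_sym[OF assms[OF \<open>w \<in> A\<close>]]] .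
qed

lemma nbr_comp:
  assumes "cn E B" "y \<in> B" "w \<in> B" "w \<noteq> y"
  shows "\<exists>t. rch E (B - {y}) w t \<and> {t, y} \<in> E"
proof -
  have r: "rch E B w y" using assms unfolding cn_def by blast
  have gen: "rch E (B - {y}) w s \<or> (\<exists>t. rch E (B - {y}) w t \<and> {t, y} \<in> E)"
    if rs: "rch E B w s" for s
  proof -
    from rs have "(\<lambda>p q. p \<in> B \<and> q \<in> B \<and> {p,q} \<in> E)\<^sup>*\<^sup>* w s" by (simp only: rch_def)
    then show ?thesis
    proof (induction rule: rtranclp_induct)
      case base show ?case by simp
    next
      case (step p q)
      show ?case
      proof (cases "rch E (B - {y}) w p")
        case True
        have pin: "p \<in> B - {y}" using rch_mem[OF True] assms by blast
        have pq: "{p, q} \<in> E" "q \<in> B" using step(2) by simp_all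
        show ?thesis
        proof (cases "q = y")
          case True then show ?thesis using pq \<open>rch E (B - {y}) w p\<close> by blast
        next
          case False
          then have "rch E (B - {y}) p q" using pq pin by (intro rch_edge) auto
          then show ?thesis using \<open>rch E (B - {y}) w p\<close> rch_trans by metis
        qed
      next
        case False then show ?thesis using step(3) by blast
      qed
    qed
  qed
  have "\<not> rch E (B - {y}) w y"
    using rch_mem[of E "B - {y}" w y] assms by blast
  then show ?thesis using gen[OF r] by blast
qed



lemma comp_remove:
  assumes "cn E B" "y \<in> B" "z \<in> B" "z \<noteq> y"
  shows "cn E (B - {t. rch E (B - {y}) z t})"
proof -
  define K where "K = {t. rch E (B - {y}) z t}"
  have yK: "y \<notin> K"
  proof
    assume "y \<in> K"
    then have r: "rch E (B - {y}) z y" by (simp add: K_def)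
    have "z \<in> B - {y}" using assms by blast
    then have "y \<in> B - {y}" by (rule rch_mem[OF r])
    then show False by blast
  qed
  have "cn E (B - K)"
  proof (rule cn_hub[where h=y])
    fix w assume w: "w \<in> B - K"
    show "rch E (B - K) w y"
    proof (cases "w = y")
      case True then show ?thesis by simp
    next
      case False
      obtain t where t: "rch E (B - {y}) w t" "{t,y} \<in> E"
        using nbr_comp[OF assms(1,2)] w False by blast
      have sub: "s \<in> B - K" if "rch E (B - {y}) w s" for s
      proof -
        have "w \<in> B - {y}" using w False by blast
        then have "s \<in> B - {y}" by (rule rch_mem[OF that])
        moreover have "s \<notin> K"
        proof
          assume "s \<in> K"
          then have "rch E (B-{y}) z s" by (simp add: K_def)
          then have "rch E (B-{y}) z w" using rch_trans[OF _ rch_sym[OF that]] by blast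
          then show False using w K_def by simp
        qed
        ultimately show ?thesis by blast
      qed
      have "rch E (B - K) w t" using rch_restrict[OF t(1) sub] .
      moreover have "t \<in> B - K" using sub[OF t(1)] .
      moreover have "y \<in> B - K" using yK assms by blast
      ultimately show ?thesis using t(2) rch_edge[of t "B - K" y E] rch_trans[of E "B - K" w t y] by blast
    qed
  qed
  then show ?thesis by (simp add: K_def)
qed

definition nsv :: "'a set set \<Rightarrow> 'a set \<Rightarrow> bool" where
  "nsv E W \<longleftrightarrow> W \<noteq> {} \<and> cn E W \<and> (\<forall>y\<in>W. cn E (W - {y}))"

lemma cn_union:
  assumes "cn E A" "cn E B" "h \<in> A" "h \<in> B"
  shows "cn E (A \<union> B)"
proof (rule cn_hub[where h=h])
  fix u assume "u \<in> A \<union> B"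
  then show "rch E (A \<union> B) u h"
  proof
    assume "u \<in> A"
    then have "rch E A u h" using assms unfolding cn_def by blast
    then show ?thesis by (rule rch_mono[rotated]) blast
  next
    assume "u \<in> B"
    then have "rch E B u h" using assms unfolding cn_def by blast
    then show ?thesis by (rule rch_mono[rotated]) blast
  qed
qed

lemma cn_minus:
  assumes "nsv E W" shows "cn E (W - {y})"
  using assms unfolding nsv_def by (cases "y \<in> W") auto

lemma nsv_union:
  assumes "nsv E W1" "nsv E W2" "p \<in> W1" "p \<in> W2" "q \<in> W1" "q \<in> W2" "p \<noteq> q"
  shows "nsv E (W1 \<union> W2)"
  unfolding nsv_def
proof (intro conjI ballI)
  show "W1 \<union> W2 \<noteq> {}" using assms by blast
  have "cn E W1" "cn E W2" using assms(1,2) unfolding nsv_def by blast+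
  then show "cn E (W1 \<union> W2)" using assms(3,4) by (rule cn_union)
  fix y assume "y \<in> W1 \<union> W2"
  have e: "W1 \<union> W2 - {y} = (W1 - {y}) \<union> (W2 - {y})" by blast
  show "cn E (W1 \<union> W2 - {y})"
  proof (cases "p = y")
    case True
    then show ?thesis unfolding e using assms cn_minus
      by (intro cn_union[where h=q]) auto
  next
    case False
    then show ?thesis unfolding e using assms cn_minus
      by (intro cn_union[where h=p]) auto
  qed
qed

lemma min_conn_nsv:
  assumes fin: "finite A" and A: "cn E A" "a1 \<in> A" "a2 \<in> A" "a1 \<noteq> a2" "x \<notin> A"
    and e: "{x, a1} \<in> E" "{x, a2} \<in> E"
  shows "\<exists>B. B \<subseteq> A \<and> nsv E (insert x B) \<and> a1 \<in> B \<and> a2 \<in> B"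
proof -
  define P where "P B \<longleftrightarrow> B \<subseteq> A \<and> a1 \<in> B \<and> a2 \<in> B \<and> cn E B" for B
  have "P A" using A by (simp add: P_def)
  then obtain B where PB: "P B" and minB: "\<And>B'. P B' \<Longrightarrow> card B \<le> card B'"
    using ex_has_least_nat[of P A card] by blast
  have BA: "B \<subseteq> A" and a1B: "a1 \<in> B" and a2B: "a2 \<in> B" and cB: "cn E B"
    using PB by (auto simp: P_def)
  have xB: "x \<notin> B" using BA A by blast
  have finB: "finite B" using BA fin finite_subset by blast
  have ea1: "{a1, x} \<in> E" using e by (simp add: insert_commute)
  have ea2: "{a2, x} \<in> E" using e by (simp add: insert_commute)
  have "nsv E (insert x B)"
    unfolding nsv_def
  proof (intro conjI ballI)
    show "insert x B \<noteq> {}" by simp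
    show "cn E (insert x B)"
    proof (rule cn_hub[where h=x])
      fix u assume "u \<in> insert x B"
      then show "rch E (insert x B) u x"
      proof
        assume "u = x" then show ?thesis by simp
      next
        assume "u \<in> B"
        then have "rch E B u a1" using cB a1B unfolding cn_def by blast
        then have "rch E (insert x B) u a1" by (rule rch_mono[rotated]) blast
        moreover have "rch E (insert x B) a1 x" using ea1 a1B by (intro rch_edge) auto
        ultimately show ?thesis by (rule rch_trans)
      qed
    qed
    fix y assume y: "y \<in> insert x B"
    show "cn E (insert x B - {y})"
    proof (cases "y = x")
      case True
      then have "insert x B - {y} = B" using xB by blast
      then show ?thesis using cB by simp
    next
      case False
      then have yB: "y \<in> B" using y by blast
      have eq: "insert x B - {y} = insert x (B - {y})" using False by blast
      have key: "\<exists>a. a \<in> {a1, a2} \<and> a \<noteq> y \<and> rch E (B - {y}) a z" if z: "z \<in> B - {y}" for z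
      proof (rule ccontr)
        assume nk: "\<not> ?thesis"
        define K where "K = {t. rch E (B - {y}) z t}"
        have cK: "cn E (B - K)" unfolding K_def using comp_remove[OF cB yB] z by blast
        have "a1 \<notin> K"
        proof
          assume "a1 \<in> K"
          then have r: "rch E (B - {y}) z a1" by (simp add: K_def)
          have "a1 \<in> B - {y}" using rch_mem[OF r z] .
          then have "a1 \<noteq> y" by blast
          then show False using nk rch_sym[OF r] by blast
        qed
        moreover have "a2 \<notin> K"
        proof
          assume "a2 \<in> K"
          then have r: "rch E (B - {y}) z a2" by (simp add: K_def)
          have "a2 \<in> B - {y}" using rch_mem[OF r z] .
          then have "a2 \<noteq> y" by blast
          then show False using nk rch_sym[OF r] by blast
        qed
        ultimately have "P (B - K)" using cK BA a1B a2B by (auto simp: P_def)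
        then have "card B \<le> card (B - K)" by (rule minB)
        moreover have "z \<in> K" by (simp add: K_def)
        then have "card (B - K) < card B" using z finB by (intro psubset_card_mono) auto
        ultimately show False by simp
      qed
      show ?thesis unfolding eq
      proof (rule cn_hub[where h=x])
        fix u assume "u \<in> insert x (B - {y})"
        then show "rch E (insert x (B - {y})) u x"
        proof
          assume "u = x" then show ?thesis by simp
        next
          assume u: "u \<in> B - {y}"
          obtain a where a: "a \<in> {a1, a2}" "a \<noteq> y" "rch E (B - {y}) a u" using key[OF u] by blast
          have "rch E (insert x (B - {y})) u a" using rch_sym[OF a(3)] by (rule rch_mono[rotated]) blast
          moreover have "{a, x} \<in> E" using a(1) ea1 ea2 by blast
          then have "rch E (insert x (B - {y})) a x" using a a1B a2B by (intro rch_edge) auto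
          ultimately show ?thesis by (rule rch_trans)
        qed
      qed
    qed
  qed
  then show ?thesis using BA a1B a2B by blast
qed



lemma rel_ind: "(\<lambda>x y. {x, y} \<in> {e \<in> E. e \<subseteq> W}) = (\<lambda>p q. p \<in> W \<and> q \<in> W \<and> {p, q} \<in> E)"
  by (intro ext) auto

lemma rel_del: "(\<lambda>x y. {x, y} \<in> del_vertex_edges v {e \<in> E. e \<subseteq> W}) =
   (\<lambda>p q. p \<in> W - {v} \<and> q \<in> W - {v} \<and> {p, q} \<in> E)"
  unfolding del_vertex_edges_def by (intro ext) auto

lemma nsv_nonsep:
  assumes "nsv E W" shows "nonseparable W {e \<in> E. e \<subseteq> W}"
  using assms unfolding nonseparable_def nsv_def connected_graph_def rel_ind rel_del
    cn_def rch_def by blast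

lemma block_ext:
  assumes g: "graph V E" and s: "subgraph W0 F0 V E" and n: "nonseparable W0 F0"
  shows "\<exists>W F. block W F V E \<and> W0 \<subseteq> W \<and> F0 \<subseteq> F"
proof -
  have finV: "finite V" using g by (simp add: graph_def)
  have EV: "E \<subseteq> Pow V" using g by (auto simp: graph_def)
  have finE: "finite E" using finite_subset[OF EV] finV by blast
  define P where "P p \<longleftrightarrow> subgraph (fst p) (snd p) V E \<and> nonseparable (fst p) (snd p)
      \<and> W0 \<subseteq> fst p \<and> F0 \<subseteq> snd p" for p
  define f where "f p = card (fst p) + card (snd p)" for p :: "'a set \<times> 'a set set"
  have P0: "P (W0, F0)" using s n by (simp add: P_def)
  have bnd: "\<forall>p. P p \<longrightarrow> f p < card V + card E + 1"
  proof (intro allI impI)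
    fix p assume "P p"
    then have "fst p \<subseteq> V" "snd p \<subseteq> E" by (auto simp: P_def subgraph_def)
    then have "card (fst p) \<le> card V" "card (snd p) \<le> card E"
      using card_mono finV finE by blast+
    then show "f p < card V + card E + 1" by (simp add: f_def)
  qed
  obtain p where Pp: "P p" and mx: "\<And>q. P q \<Longrightarrow> f q \<le> f p"
    using ex_has_greatest_nat[of P "(W0, F0)" f, OF P0 bnd] by blast
  obtain W F where p: "p = (W, F)" by (cases p)
  have blk: "block W F V E"
    unfolding block_def
  proof (intro conjI allI impI)
    show "subgraph W F V E" "nonseparable W F" using Pp p by (auto simp: P_def)
    fix W' F' assume h: "subgraph W' F' V E \<and> nonseparable W' F' \<and> W \<subseteq> W' \<and> F \<subseteq> F'"
    have "P (W', F')" using h Pp p by (auto simp: P_def)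
    then have le: "card W' + card F' \<le> card W + card F" using mx[of "(W', F')"] p by (simp add: f_def)
    have fW': "finite W'" "finite F'" using h finite_subset finV finE by (auto simp: subgraph_def)
    have "card W \<le> card W'" "card F \<le> card F'" using h fW' card_mono by blast+
    then have "card W = card W'" "card F = card F'" using le by linarith+
    then show "W' = W" "F' = F" using h fW' card_subset_eq by metis+
  qed
  then show ?thesis using Pp p by (auto simp: P_def)
qed

lemma three_elems:
  assumes "finite S" "2 < card S"
  shows "\<exists>a b c. a \<in> S \<and> b \<in> S \<and> c \<in> S \<and> a \<noteq> b \<and> a \<noteq> c \<and> b \<noteq> c"
proof -
  obtain a where a: "a \<in> S" using assms by fastforce
  have "1 < card (S - {a})" using assms a by simp
  then have "S - {a} \<noteq> {}" by (metis card.empty not_less_zero)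
  then obtain b where b: "b \<in> S - {a}" by blast
  have "0 < card (S - {a} - {b})" using assms a b by simp
  then have "S - {a} - {b} \<noteq> {}" by (metis card.empty less_irrefl)
  then obtain c where c: "c \<in> S - {a} - {b}" by blast
  show ?thesis using a b c by blast
qed

lemma cactus_Q:
  assumes cac: "cactus V E" and AV: "A \<subseteq> V" and xA: "x \<notin> A" and cA: "cn E A"
  shows "card ({u. {x, u} \<in> E} \<inter> A) \<le> 2"
proof (rule ccontr)
  assume "\<not> ?thesis"
  then have c3: "2 < card ({u. {x, u} \<in> E} \<inter> A)" by simp
  have g: "graph V E" using cac by (simp add: cactus_def)
  have finV: "finite V" using g by (simp add: graph_def)
  have finA: "finite A" using AV finV finite_subset by blast
  obtain a1 a2 a3 where a: "a1 \<in> {u. {x, u} \<in> E} \<inter> A" "a2 \<in> {u. {x, u} \<in> E} \<inter> A"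
      "a3 \<in> {u. {x, u} \<in> E} \<inter> A" "a1 \<noteq> a2" "a1 \<noteq> a3" "a2 \<noteq> a3"
    using three_elems[OF _ c3] finA by blast
  have xV: "x \<in> V" using a(1) g by (auto simp: graph_def)
  obtain B1 where B1: "B1 \<subseteq> A" "nsv E (insert x B1)" "a1 \<in> B1" "a2 \<in> B1"
    using min_conn_nsv[OF finA cA, of a1 a2 x] a xA by blast
  obtain B2 where B2: "B2 \<subseteq> A" "nsv E (insert x B2)" "a2 \<in> B2" "a3 \<in> B2"
    using min_conn_nsv[OF finA cA, of a2 a3 x] a xA by blast
  define W where "W = insert x B1 \<union> insert x B2"
  have nW: "nsv E W" unfolding W_def
    using nsv_union[OF B1(2) B2(2), of x a2] B1 B2 a xA by blast
  have WV: "W \<subseteq> V" using B1 B2 AV xV by (auto simp: W_def)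
  define F0 where "F0 = {e \<in> E. e \<subseteq> W}"
  have ns: "nonseparable W F0" unfolding F0_def by (rule nsv_nonsep[OF nW])
  have sg: "subgraph W F0 V E" using WV by (auto simp: subgraph_def F0_def)
  obtain W' F' where blk: "block W' F' V E" and WW: "W \<subseteq> W'" and FF: "F0 \<subseteq> F'"
    using block_ext[OF g sg ns] by blast
  have inW: "x \<in> W" "a1 \<in> W" "a2 \<in> W" "a3 \<in> W" using B1 B2 by (auto simp: W_def)
  have inF: "{x, a1} \<in> F'" "{x, a2} \<in> F'" "{x, a3} \<in> F'"
    using a inW FF by (auto simp: F0_def)
  have xW': "x \<in> W'" using inW WW by blast
  have F'E: "F' \<subseteq> E" using blk by (simp add: block_def subgraph_def)
  have finN: "finite {u. {x, u} \<in> F'}"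
  proof (rule finite_subset[OF _ finV])
    show "{u. {x, u} \<in> F'} \<subseteq> V"
    proof
      fix u assume "u \<in> {u. {x, u} \<in> F'}"
      then have "{x, u} \<in> E" using F'E by blast
      then have "{x, u} \<subseteq> V" using g unfolding graph_def by blast
      then show "u \<in> V" by simp
    qed
  qed
  have "{a1, a2, a3} \<subseteq> {u. {x, u} \<in> F'}" using inF by blast
  then have "card {a1, a2, a3} \<le> degree F' x" unfolding degree_def
    using card_mono[OF finN] by blast
  then have d3: "3 \<le> degree F' x" using a by simp
  have "is_cycle_graph W' F' \<or> is_single_edge W' F' \<or> is_single_vertex W' F'"
    using cac blk by (simp add: cactus_def)
  then show False
  proof (elim disjE)
    assume "is_cycle_graph W' F'"
    then have "degree F' x = 2" using xW' by (simp add: is_cycle_graph_def)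
    then show False using d3 by simp
  next
    assume "is_single_edge W' F'"
    then have "F' = {W'}" by (simp add: is_single_edge_def)
    then have "{x, a1} = {x, a2}" using inF by simp
    then show False using a(4) by (simp add: doubleton_eq_iff)
  next
    assume "is_single_vertex W' F'"
    then show False using inF by (simp add: is_single_vertex_def)
  qed
qed



locale cq =
  fixes V :: "'a set" and E :: "'a set set" and k :: nat
  assumes finV: "finite V"
    and edg: "\<And>e. e \<in> E \<Longrightarrow> e \<subseteq> V \<and> card e = 2"
    and k2: "2 \<le> k"
    and Q: "\<And>x A. A \<subseteq> V \<Longrightarrow> x \<notin> A \<Longrightarrow> cn E A \<Longrightarrow> card ({u. {x,u} \<in> E} \<inter> A) \<le> 2"
begin

definition nb :: "'a \<Rightarrow> 'a set" where "nb x = {u. {x,u} \<in> E}"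
definition dg :: "'a set \<Rightarrow> 'a \<Rightarrow> nat" where "dg U x = card (nb x \<inter> U)"
definition valid :: "'a set \<Rightarrow> ('a \<Rightarrow> nat) \<Rightarrow> 'a set \<Rightarrow> bool" where
  "valid U c D \<longleftrightarrow> D \<subseteq> U \<and> (\<forall>x\<in>U - D. dg (U - D) x \<le> c x)"
definition dfc :: "'a set \<Rightarrow> ('a \<Rightarrow> nat) \<Rightarrow> nat" where
  "dfc U c = (\<Sum>x\<in>U. k - c x)"
definition good :: "'a set \<Rightarrow> ('a \<Rightarrow> nat) \<Rightarrow> 'a set \<Rightarrow> bool" where
  "good U c D \<longleftrightarrow> valid U c D \<and> (k+1) * card D + 1 \<le> card U + dfc U c"
definition IH :: "'a set \<Rightarrow> bool" where
  "IH U \<longleftrightarrow> (\<forall>U' c'. U' \<subseteq> V \<longrightarrow> U' \<noteq> {} \<longrightarrow> card U' < card U \<longrightarrow> (\<forall>x\<in>U'. c' x \<le> k)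
      \<longrightarrow> (\<exists>D. good U' c' D))"

lemma nb_sym: "u \<in> nb x \<longleftrightarrow> x \<in> nb u"
  unfolding nb_def by (simp add: insert_commute)

lemma nb_irrefl: "x \<notin> nb x"
proof
  assume "x \<in> nb x"
  then have "{x} \<in> E" by (simp add: nb_def)
  then have "card {x} = 2" using edg by blast
  then show False by simp
qed

lemma nb_V: "u \<in> nb x \<Longrightarrow> u \<in> V \<and> x \<in> V"
proof -
  assume "u \<in> nb x"
  then have "{x,u} \<in> E" by (simp add: nb_def)
  then have "{x,u} \<subseteq> V" using edg by blast
  then show ?thesis by simp
qed

lemma fin_sub: "U \<subseteq> V \<Longrightarrow> finite U"
  using finV finite_subset by blast

lemma fin_nb: "finite (nb x)"
proof (rule finite_subset[OF _ finV])
  show "nb x \<subseteq> V" using nb_V by blast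
qed

lemma dg_mono: "A \<subseteq> B \<Longrightarrow> dg A x \<le> dg B x"
  unfolding dg_def by (rule card_mono) (use fin_nb in auto)

lemma dg_le: "nb x \<inter> A \<subseteq> S \<Longrightarrow> finite S \<Longrightarrow> dg A x \<le> card S"
  unfolding dg_def by (rule card_mono)

lemma dfc_split: "finite U \<Longrightarrow> A \<subseteq> U \<Longrightarrow> dfc U c = dfc (U - A) c + dfc A c"
  unfolding dfc_def by (metis add.commute sum.subset_diff)

lemma dfc_upd:
  assumes "finite U" "y \<in> U" "m \<le> c y" "c y \<le> k"
  shows "dfc U (c(y := c y - m)) = dfc U c + m"
proof -
  have "dfc U (c(y := c y - m)) = (k - (c y - m)) + (\<Sum>x\<in>U - {y}. k - c x)"
    unfolding dfc_def using assms by (simp add: sum.remove)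
  moreover have "dfc U c = (k - c y) + (\<Sum>x\<in>U - {y}. k - c x)"
    unfolding dfc_def using assms by (simp add: sum.remove)
  ultimately show ?thesis using assms(3,4) by simp
qed

lemma dfc_single: "dfc {x} c = k - c x"
  by (simp add: dfc_def)

lemma dfc_ge: "finite U \<Longrightarrow> x \<in> U \<Longrightarrow> k - c x \<le> dfc U c"
  unfolding dfc_def by (rule member_le_sum) auto

lemma weak:
  assumes ih: "IH U" and sub: "U' \<subseteq> V" and lt: "card U' < card U" and cap: "\<forall>x\<in>U'. c x \<le> k"
  shows "\<exists>D. valid U' c D \<and> (k+1) * card D \<le> card U' + dfc U' c"
proof (cases "U' = {}")
  case True
  then show ?thesis by (intro exI[of _ "{}"]) (simp add: valid_def)
next
  case False
  then obtain D where "good U' c D" using ih sub lt cap unfolding IH_def by blast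
  then show ?thesis unfolding good_def by (intro exI[of _ D]) simp
qed

lemma base:
  assumes "U \<noteq> {}" "U \<subseteq> V" "\<forall>x\<in>U. dg U x \<le> c x"
  shows "good U c {}"
proof -
  have "finite U" using assms fin_sub by blast
  then have "1 \<le> card U" using assms(1) by (simp add: Suc_leI card_gt_0_iff)
  then show ?thesis using assms unfolding good_def valid_def by simp
qed

lemma dg_sub: "nb x \<inter> A \<subseteq> B \<Longrightarrow> dg A x \<le> dg B x"
  unfolding dg_def by (rule card_mono) (use fin_nb in auto)

lemma red0:
  assumes ih: "IH U" and sub: "U \<subseteq> V" and cap: "\<forall>x\<in>U. c x \<le> k"
    and u: "u \<in> U" and w: "w \<in> U" and nr: "\<not> rch E U u w"
  shows "\<exists>D. good U c D"
proof -
  define A where "A = {t. rch E U u t}"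
  define B where "B = U - A"
  have AU: "A \<subseteq> U"
  proof
    fix t assume "t \<in> A"
    then have "rch E U u t" by (simp add: A_def)
    then show "t \<in> U" by (rule rch_mem) (rule u)
  qed
  have uA: "u \<in> A" by (simp add: A_def)
  have wB: "w \<in> B" using nr w by (simp add: A_def B_def)
  have finU: "finite U" using sub fin_sub by blast
  have "A \<subset> U" using AU wB unfolding B_def by blast
  then have cA: "card A < card U" using finU by (simp add: psubset_card_mono)
  have "B \<subset> U" using uA u unfolding B_def by blast
  then have cB: "card B < card U" using finU by (simp add: psubset_card_mono)
  obtain DA where gA: "good A c DA"
    using ih AU sub cA cap uA unfolding IH_def by (metis empty_iff subset_trans subsetD)
  have BU: "B \<subseteq> U" by (simp add: B_def)
  obtain DB where gB: "good B c DB"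
    using ih BU sub cB cap wB unfolding IH_def by (metis empty_iff subset_trans subsetD)
  have noedge: "y \<in> A" if "x \<in> A" "y \<in> U" "y \<in> nb x" for x y
  proof -
    have "rch E U u x" using that(1) by (simp add: A_def)
    moreover have "x \<in> U" using that(1) AU by blast
    then have "rch E U x y" using that(2,3) by (intro rch_edge) (simp_all add: nb_def)
    ultimately have "rch E U u y" by (rule rch_trans)
    then show ?thesis by (simp add: A_def)
  qed
  define D where "D = DA \<union> DB"
  have vA: "valid A c DA" and vB: "valid B c DB" using gA gB by (simp_all add: good_def)
  have DAA: "DA \<subseteq> A" and DBB: "DB \<subseteq> B" using vA vB by (simp_all add: valid_def)
  have "valid U c D"
    unfolding valid_def
  proof (intro conjI ballI)
    show "D \<subseteq> U" using DAA DBB AU BU by (auto simp: D_def)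
    fix x assume x: "x \<in> U - D"
    show "dg (U - D) x \<le> c x"
    proof (cases "x \<in> A")
      case True
      have "nb x \<inter> (U - D) \<subseteq> A - DA" using noedge[OF True] by (auto simp: D_def)
      then have "dg (U - D) x \<le> dg (A - DA) x" by (rule dg_sub)
      also have "\<dots> \<le> c x" using vA True x unfolding valid_def D_def by blast
      finally show ?thesis .
    next
      case False
      then have xB: "x \<in> B" using x by (simp add: B_def)
      have "nb x \<inter> (U - D) \<subseteq> B - DB"
      proof
        fix t assume t: "t \<in> nb x \<inter> (U - D)"
        have "t \<notin> A"
        proof
          assume "t \<in> A"
          then have "x \<in> A" using noedge[of t x] x t nb_sym by blast
          then show False using False by simp
        qed
        then show "t \<in> B - DB" using t by (auto simp: B_def D_def)
      qed
      then have "dg (U - D) x \<le> dg (B - DB) x" by (rule dg_sub)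
      also have "\<dots> \<le> c x" using vB xB x unfolding valid_def D_def by blast
      finally show ?thesis .
    qed
  qed
  moreover have "card D = card DA + card DB"
  proof -
    have fA: "finite A" using finite_subset[OF AU finU] .
    have fB: "finite B" using finite_subset[OF BU finU] .
    have "finite DA" using finite_subset[OF DAA fA] .
    moreover have "finite DB" using finite_subset[OF DBB fB] .
    moreover have "DA \<inter> DB = {}" using DAA DBB by (auto simp: B_def)
    ultimately show ?thesis unfolding D_def by (rule card_Un_disjoint)
  qed
  moreover have "card U = card A + card B"
    using AU finU unfolding B_def by (metis card_Diff_subset finite_subset le_add_diff_inverse card_mono)
  moreover have "dfc U c = dfc B c + dfc A c"
    unfolding B_def using finU AU by (rule dfc_split)
  ultimately show ?thesis using gA gB unfolding good_def
    by (intro exI[of _ D]) (simp add: algebra_simps)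
qed

lemma card_ins: "finite D \<Longrightarrow> a \<notin> D \<Longrightarrow> card (insert a D) = card D + 1"
  by simp

lemma red1:
  assumes ih: "IH U" and sub: "U \<subseteq> V" and cap: "\<forall>x\<in>U. c x \<le> k"
    and x: "x \<in> U" and cx: "c x = 0" and nbx: "nb x \<inter> U \<noteq> {}"
  shows "\<exists>D. good U c D"
proof -
  define U' where "U' = U - {x}"
  have finU: "finite U" using sub fin_sub by blast
  obtain y where y: "y \<in> nb x \<inter> U" using nbx by blast
  have "y \<noteq> x" using y nb_irrefl by blast
  then have ne: "U' \<noteq> {}" using y by (auto simp: U'_def)
  have cU': "card U' < card U" unfolding U'_def by (rule card_Diff1_less[OF finU x])
  have sub': "U' \<subseteq> V" using sub by (auto simp: U'_def)
  have cap': "\<forall>x\<in>U'. c x \<le> k" using cap by (auto simp: U'_def)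
  obtain D' where g: "good U' c D'" using ih sub' ne cU' cap' unfolding IH_def by blast
  have v': "valid U' c D'" and cnt: "(k+1) * card D' + 1 \<le> card U' + dfc U' c"
    using g by (simp_all add: good_def)
  have D'U': "D' \<subseteq> U'" using v' by (simp add: valid_def)
  define D where "D = insert x D'"
  have eq: "U - D = U' - D'" by (auto simp: D_def U'_def)
  have "valid U c D"
    unfolding valid_def
  proof (intro conjI ballI)
    show "D \<subseteq> U" using D'U' x by (auto simp: D_def U'_def)
    fix y assume "y \<in> U - D"
    then show "dg (U - D) y \<le> c y" using v' unfolding eq valid_def by blast
  qed
  moreover have "card D = card D' + 1"
    unfolding D_def using D'U' finU by (intro card_ins) (auto simp: U'_def intro: finite_subset)
  moreover have "card U = card U' + 1" unfolding U'_def using card.remove[OF finU x] by simp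
  moreover have "dfc U c = dfc U' c + k"
    using dfc_split[OF finU, of "{x}" c] x cx by (simp add: U'_def dfc_single)
  ultimately show ?thesis using cnt unfolding good_def
    by (intro exI[of _ D]) (simp add: algebra_simps)
qed

lemma red6:
  assumes ih: "IH U" and sub: "U \<subseteq> V" and cap: "\<forall>x\<in>U. c x \<le> k"
    and v: "v \<in> U" and CU: "C \<subseteq> U - {v}" and Cne: "C \<noteq> {}"
    and cl: "\<forall>x\<in>C. nb x \<inter> U \<subseteq> insert v C" and nh: "\<forall>x\<in>C. dg U x \<le> c x"
  shows "\<exists>D. good U c D"
proof -
  have finU: "finite U" using sub fin_sub by blast
  have finC: "finite C" using finite_subset[OF CU] finU by blast
  define m where "m = card (nb v \<inter> C)"
  have mC: "m \<le> card C" unfolding m_def using finC by (intro card_mono) auto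
  have noadj: "t \<notin> nb y" if "y \<in> U" "y \<notin> C" "y \<noteq> v" "t \<in> C" for y t
  proof
    assume "t \<in> nb y"
    then have "y \<in> nb t \<inter> U" using nb_sym that(1) by blast
    then show False using cl that by blast
  qed
  have vC: "v \<notin> C" using CU by blast
  show ?thesis
  proof (cases "m \<le> c v")
    case True
    define U' where "U' = U - C"
    define c' where "c' = c(v := c v - m)"
    have vU': "v \<in> U'" using v vC by (simp add: U'_def)
    have cU': "card U' < card U"
    proof -
      have "U' \<subset> U" using CU Cne unfolding U'_def by blast
      then show ?thesis using finU by (simp add: psubset_card_mono)
    qed
    have sub': "U' \<subseteq> V" using sub by (auto simp: U'_def)
    have cap': "\<forall>x\<in>U'. c' x \<le> k" using cap by (auto simp: U'_def c'_def)
    obtain D' where g: "good U' c' D'" using ih sub' vU' cU' cap' unfolding IH_def by blast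
    have v': "valid U' c' D'" and cnt: "(k+1) * card D' + 1 \<le> card U' + dfc U' c'"
      using g by (simp_all add: good_def)
    have D'U': "D' \<subseteq> U'" using v' by (simp add: valid_def)
    have "valid U c D'"
      unfolding valid_def
    proof (intro conjI ballI)
      show "D' \<subseteq> U" using D'U' by (auto simp: U'_def)
      fix y assume y: "y \<in> U - D'"
      show "dg (U - D') y \<le> c y"
      proof (cases "y \<in> C")
        case True
        have "dg (U - D') y \<le> dg U y" by (rule dg_mono) blast
        then show ?thesis using nh True by fastforce
      next
        case False
        show ?thesis
        proof (cases "y = v")
          case True
          have vD': "v \<notin> D'" using y True by blast
          have "nb v \<inter> (U - D') \<subseteq> (nb v \<inter> (U' - D')) \<union> (nb v \<inter> C)" by (auto simp: U'_def)
          then have "dg (U - D') v \<le> card ((nb v \<inter> (U' - D')) \<union> (nb v \<inter> C))"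
            using fin_nb by (intro dg_le) auto
          also have "\<dots> \<le> card (nb v \<inter> (U' - D')) + card (nb v \<inter> C)" by (rule card_Un_le)
          also have "\<dots> = dg (U' - D') v + m" by (simp add: dg_def m_def)
          also have "dg (U' - D') v \<le> c' v" using v' vU' vD' unfolding valid_def by blast
          then have "dg (U' - D') v + m \<le> c v" using True \<open>m \<le> c v\<close> by (simp add: c'_def)
          finally show ?thesis using True by simp
        next
          case False
          have yU': "y \<in> U' - D'" using y \<open>y \<notin> C\<close> by (simp add: U'_def)
          have "nb y \<inter> (U - D') \<subseteq> U' - D'"
            using noadj[of y] y \<open>y \<notin> C\<close> False by (auto simp: U'_def)
          then have "dg (U - D') y \<le> dg (U' - D') y" by (rule dg_sub)
          also have "\<dots> \<le> c' y" using v' yU' unfolding valid_def by blast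
          finally show ?thesis using False by (simp add: c'_def)
        qed
      qed
    qed
    moreover have "card U = card U' + card C"
      unfolding U'_def using CU finU by (metis Diff_subset card_Diff_subset finite_subset le_add_diff_inverse2 card_mono subset_trans)
    moreover have "dfc U c = dfc U' c + dfc C c"
      unfolding U'_def using finU CU by (intro dfc_split) auto
    moreover have "dfc U' c' = dfc U' c + m"
      unfolding c'_def using finU vU' True cap v by (intro dfc_upd) (auto simp: U'_def)
    ultimately show ?thesis using cnt mC unfolding good_def
      by (intro exI[of _ D']) simp
  next
    case False
    define R where "R = U - C - {v}"
    have cR: "card R < card U"
    proof -
      have "R \<subset> U" using v unfolding R_def by blast
      then show ?thesis using finU by (simp add: psubset_card_mono)
    qed
    have subR: "R \<subseteq> V" using sub by (auto simp: R_def)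
    have capR: "\<forall>x\<in>R. c x \<le> k" using cap by (auto simp: R_def)
    obtain DR where vR: "valid R c DR" and cnt: "(k+1) * card DR \<le> card R + dfc R c"
      using weak[OF ih subR cR capR] by blast
    have DRR: "DR \<subseteq> R" using vR by (simp add: valid_def)
    define D where "D = insert v DR"
    have "valid U c D"
      unfolding valid_def
    proof (intro conjI ballI)
      show "D \<subseteq> U" using DRR v by (auto simp: D_def R_def)
      fix y assume y: "y \<in> U - D"
      show "dg (U - D) y \<le> c y"
      proof (cases "y \<in> C")
        case True
        have "dg (U - D) y \<le> dg U y" by (rule dg_mono) blast
        then show ?thesis using nh True by fastforce
      next
        case False
        have yR: "y \<in> R - DR" using y False by (auto simp: R_def D_def)
        have "nb y \<inter> (U - D) \<subseteq> R - DR"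
          using noadj[of y] y False yR by (auto simp: R_def D_def)
        then have "dg (U - D) y \<le> dg (R - DR) y" by (rule dg_sub)
        also have "\<dots> \<le> c y" using vR yR unfolding valid_def by blast
        finally show ?thesis .
      qed
    qed
    moreover have "card D = card DR + 1"
      unfolding D_def using DRR finU by (intro card_ins) (auto simp: R_def intro: finite_subset)
    moreover have "card U = card R + card C + 1"
    proof -
      have "card U = card (U - C) + card C"
        using CU finU by (metis Diff_subset card_Diff_subset finite_subset le_add_diff_inverse2 card_mono subset_trans)
      moreover have "card (U - C) = card R + 1"
      proof -
        have "v \<in> U - C" using v vC by blast
        then have "card (U - C) = Suc (card (U - C - {v}))" using finU by (intro card.remove) auto
        then show ?thesis by (simp add: R_def)
      qed
      ultimately show ?thesis by simp
    qed
    moreover have "dfc U c = dfc R c + dfc C c + (k - c v)"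
    proof -
      have "dfc U c = dfc (U - C) c + dfc C c" using finU CU by (intro dfc_split) auto
      moreover have "dfc (U - C) c = dfc R c + dfc {v} c"
        unfolding R_def using finU v vC by (intro dfc_split) auto
      ultimately show ?thesis by (simp add: dfc_single)
    qed
    moreover have "c v < m" using False by simp
    ultimately show ?thesis using cnt mC unfolding good_def
      by (intro exI[of _ D]) simp
  qed
qed

end


context cq begin

lemma red4:
  assumes ih: "IH U" and sub: "U \<subseteq> V" and cap: "\<forall>x\<in>U. c x \<le> k"
    and w: "w \<in> U" and cw: "c w = 1" and nbw: "nb w \<inter> U = {a, b}" and ab: "a \<noteq> b"
    and ca: "c a < k" and cb: "1 \<le> c b"
  shows "\<exists>D. good U c D"
proof -
  have finU: "finite U" using sub fin_sub by blast
  have aU: "a \<in> U" and bU: "b \<in> U" and anb: "a \<in> nb w" and bnb: "b \<in> nb w" using nbw by blast+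
  have aw: "a \<noteq> w" using anb nb_irrefl by blast
  have bw: "b \<noteq> w" using bnb nb_irrefl by blast
  define U' where "U' = U - {a, w}"
  define c' where "c' = c(b := c b - 1)"
  have bU': "b \<in> U'" using bU ab bw by (simp add: U'_def)
  have cU': "card U' < card U"
  proof -
    have "U' \<subset> U" using w unfolding U'_def by blast
    then show ?thesis using finU by (simp add: psubset_card_mono)
  qed
  have sub': "U' \<subseteq> V" using sub by (auto simp: U'_def)
  have cap': "\<forall>x\<in>U'. c' x \<le> k" using cap by (auto simp: U'_def c'_def)
  obtain D' where g: "good U' c' D'" using ih sub' bU' cU' cap' unfolding IH_def by blast
  have v': "valid U' c' D'" and cnt: "(k+1) * card D' + 1 \<le> card U' + dfc U' c'"
    using g by (simp_all add: good_def)
  have D'U': "D' \<subseteq> U'" using v' by (simp add: valid_def)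
  define D where "D = insert a D'"
  have "valid U c D"
    unfolding valid_def
  proof (intro conjI ballI)
    show "D \<subseteq> U" using D'U' aU by (auto simp: D_def U'_def)
    fix y assume y: "y \<in> U - D"
    show "dg (U - D) y \<le> c y"
    proof (cases "y = w")
      case True
      have "nb w \<inter> (U - D) \<subseteq> {b}" using nbw by (auto simp: D_def)
      then have "dg (U - D) w \<le> card {b}" by (rule dg_le) simp
      then show ?thesis using True cw by simp
    next
      case yw: False
      show ?thesis
      proof (cases "y = b")
        case True
        have bD': "b \<notin> D'" using y True by (simp add: D_def)
        have "nb b \<inter> (U - D) \<subseteq> insert w (nb b \<inter> (U' - D'))" by (auto simp: D_def U'_def)
        then have "dg (U - D) b \<le> card (insert w (nb b \<inter> (U' - D')))"
          using fin_nb by (intro dg_le) auto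
        also have "\<dots> \<le> card (nb b \<inter> (U' - D')) + 1" by (simp add: card_insert_le_m1 card_insert_if fin_nb)
        also have "card (nb b \<inter> (U' - D')) \<le> c' b" using v' bU' bD' unfolding valid_def dg_def by blast
        finally show ?thesis using True cb by (simp add: c'_def)
      next
        case yb: False
        have yU': "y \<in> U' - D'" using y yw by (auto simp: U'_def D_def)
        have "nb y \<inter> (U - D) \<subseteq> U' - D'"
        proof
          fix t assume t: "t \<in> nb y \<inter> (U - D)"
          have "t \<noteq> w"
          proof
            assume "t = w"
            then have "y \<in> nb w \<inter> U" using t y nb_sym by blast
            then show False using nbw yb yU' by (auto simp: U'_def)
          qed
          then show "t \<in> U' - D'" using t by (auto simp: U'_def D_def)
        qed
        then have "dg (U - D) y \<le> dg (U' - D') y" by (rule dg_sub)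
        also have "\<dots> \<le> c' y" using v' yU' unfolding valid_def by blast
        finally show ?thesis using yb by (simp add: c'_def)
      qed
    qed
  qed
  moreover have "card D = card D' + 1"
  proof -
    have "a \<notin> D'" using D'U' by (auto simp: U'_def)
    moreover have "finite D'" using D'U' finU by (auto simp: U'_def intro: finite_subset)
    ultimately show ?thesis unfolding D_def by (rule card_ins[rotated])
  qed
  moreover have "card U = card U' + 2"
  proof -
    have "card U = card (U - {a, w}) + card {a, w}"
      using finU aU w by (metis card_Diff_subset empty_subsetI insert_subset card_mono le_add_diff_inverse2 finite.emptyI finite.insertI)
    then show ?thesis using aw by (simp add: U'_def)
  qed
  moreover have "dfc U c = dfc U' c + (k - c a) + (k - 1)"
  proof -
    have "dfc U c = dfc U' c + dfc {a, w} c" unfolding U'_def using finU aU w by (intro dfc_split) auto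
    moreover have "dfc {a, w} c = (k - c a) + (k - c w)" using aw by (simp add: dfc_def)
    ultimately show ?thesis using cw by simp
  qed
  moreover have "dfc U' c' = dfc U' c + 1"
    unfolding c'_def using finU bU' cb cap bU by (intro dfc_upd) (auto simp: U'_def)
  ultimately show ?thesis using cnt ca unfolding good_def
    by (intro exI[of _ D]) simp
qed

lemma card3: "finite U \<Longrightarrow> a \<in> U \<Longrightarrow> w \<in> U \<Longrightarrow> b \<in> U \<Longrightarrow> a \<noteq> w \<Longrightarrow> a \<noteq> b \<Longrightarrow> w \<noteq> b
   \<Longrightarrow> card U = card (U - {a, w, b}) + 3"
proof -
  assume h: "finite U" "a \<in> U" "w \<in> U" "b \<in> U" "a \<noteq> w" "a \<noteq> b" "w \<noteq> b"
  have "{a, w, b} \<subseteq> U" using h by blast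
  then have "card U = card (U - {a, w, b}) + card {a, w, b}"
    using h(1) by (metis card_Diff_subset card_mono finite_subset le_add_diff_inverse2)
  then show ?thesis using h by simp
qed

lemma red5:
  assumes ih: "IH U" and sub: "U \<subseteq> V" and cap: "\<forall>x\<in>U. c x \<le> k"
    and w: "w \<in> U" and cw: "c w = 1" and nbw: "nb w \<inter> U = {a, b}" and ab: "a \<noteq> b"
    and nbb: "nb b \<inter> U = {w, y}" and wy: "w \<noteq> y" and cb: "2 \<le> c b" and cy: "1 \<le> c y"
  shows "\<exists>D. good U c D"
proof -
  have finU: "finite U" using sub fin_sub by blast
  have aU: "a \<in> U" and bU: "b \<in> U" and anb: "a \<in> nb w" and bnb: "b \<in> nb w" using nbw by blast+
  have yU: "y \<in> U" and ynb: "y \<in> nb b" using nbb by blast+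
  have aw: "a \<noteq> w" using anb nb_irrefl by blast
  have bw: "b \<noteq> w" using bnb nb_irrefl by blast
  have yb: "y \<noteq> b" using ynb nb_irrefl by blast
  define U' where "U' = U - {a, w, b}"
  have cU': "card U' < card U"
  proof -
    have "U' \<subset> U" using w unfolding U'_def by blast
    then show ?thesis using finU by (simp add: psubset_card_mono)
  qed
  have sub': "U' \<subseteq> V" using sub by (auto simp: U'_def)
  have cntU: "card U = card U' + 3" unfolding U'_def using card3[OF finU aU w bU aw ab] bw by simp
  have dfU: "dfc U c = dfc U' c + (k - c a) + (k - 1) + (k - c b)"
  proof -
    have "dfc U c = dfc U' c + dfc {a, w, b} c" unfolding U'_def using finU aU w bU by (intro dfc_split) auto
    moreover have "dfc {a, w, b} c = (k - c a) + (k - c w) + (k - c b)" using aw ab bw by (simp add: dfc_def)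
    ultimately show ?thesis using cw by simp
  qed
  have wnot: "t \<noteq> w" if "t \<in> nb z" "z \<in> U'" for t z
  proof
    assume "t = w"
    then have "z \<in> nb w \<inter> U" using that nb_sym by (auto simp: U'_def)
    then show False using nbw that(2) by (auto simp: U'_def)
  qed
  show ?thesis
  proof (cases "y = a")
    case False
    define c' where "c' = c(y := c y - 1)"
    have yU': "y \<in> U'" using yU False wy yb by (simp add: U'_def)
    have cap': "\<forall>x\<in>U'. c' x \<le> k" using cap by (auto simp: U'_def c'_def)
    obtain D' where g: "good U' c' D'" using ih sub' yU' cU' cap' unfolding IH_def by blast
    have v': "valid U' c' D'" and cnt: "(k+1) * card D' + 1 \<le> card U' + dfc U' c'"
      using g by (simp_all add: good_def)
    have D'U': "D' \<subseteq> U'" using v' by (simp add: valid_def)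
    define D where "D = insert a D'"
    have "valid U c D"
      unfolding valid_def
    proof (intro conjI ballI)
      show "D \<subseteq> U" using D'U' aU by (auto simp: D_def U'_def)
      fix z assume z: "z \<in> U - D"
      show "dg (U - D) z \<le> c z"
      proof (cases "z = w")
        case True
        have "nb w \<inter> (U - D) \<subseteq> {b}" using nbw by (auto simp: D_def)
        then have "dg (U - D) w \<le> card {b}" by (rule dg_le) simp
        then show ?thesis using True cw by simp
      next
        case zw: False
        show ?thesis
        proof (cases "z = b")
          case True
          have "nb b \<inter> (U - D) \<subseteq> {w, y}" using nbb by auto
          then have "dg (U - D) b \<le> card {w, y}" by (rule dg_le) simp
          also have "\<dots> \<le> 2" by (simp add: card_insert_le_m1 card_insert_if)
          finally show ?thesis using True cb by simp
        next
          case zb: False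
          have zU': "z \<in> U' - D'" using z zw zb by (auto simp: U'_def D_def)
          show ?thesis
          proof (cases "z = y")
            case True
            have "nb y \<inter> (U - D) \<subseteq> insert b (nb y \<inter> (U' - D'))"
              using wnot[of _ y] yU' by (auto simp: D_def U'_def)
            then have "dg (U - D) y \<le> card (insert b (nb y \<inter> (U' - D')))"
              using fin_nb by (intro dg_le) auto
            also have "\<dots> \<le> card (nb y \<inter> (U' - D')) + 1" by (simp add: card_insert_if fin_nb)
            also have "card (nb y \<inter> (U' - D')) \<le> c' y" using v' zU' True unfolding valid_def dg_def by blast
            finally show ?thesis using True cy by (simp add: c'_def)
          next
            case zy: False
            have "nb z \<inter> (U - D) \<subseteq> U' - D'"
            proof
              fix t assume t: "t \<in> nb z \<inter> (U - D)"
              have "t \<noteq> w" using wnot[of t z] t zU' by blast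
              moreover have "t \<noteq> b"
              proof
                assume "t = b"
                then have "z \<in> nb b \<inter> U" using t z nb_sym by blast
                then show False using nbb zw zy by blast
              qed
              ultimately show "t \<in> U' - D'" using t by (auto simp: U'_def D_def)
            qed
            then have "dg (U - D) z \<le> dg (U' - D') z" by (rule dg_sub)
            also have "\<dots> \<le> c' z" using v' zU' unfolding valid_def by blast
            finally show ?thesis using zy by (simp add: c'_def)
          qed
        qed
      qed
    qed
    moreover have "card D = card D' + 1"
    proof -
      have "a \<notin> D'" using D'U' by (auto simp: U'_def)
      moreover have "finite D'" using D'U' finU by (auto simp: U'_def intro: finite_subset)
      ultimately show ?thesis unfolding D_def by (rule card_ins[rotated])
    qed
    moreover have "dfc U' c' = dfc U' c + 1"
      unfolding c'_def using finU yU' cy cap yU by (intro dfc_upd) (auto simp: U'_def)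
    ultimately show ?thesis using cnt cntU dfU unfolding good_def
      by (intro exI[of _ D]) simp
  next
    case True
    have cap': "\<forall>x\<in>U'. c x \<le> k" using cap by (auto simp: U'_def)
    obtain D' where v': "valid U' c D'" and cnt: "(k+1) * card D' \<le> card U' + dfc U' c"
      using weak[OF ih sub' cU' cap'] by blast
    have D'U': "D' \<subseteq> U'" using v' by (simp add: valid_def)
    define D where "D = insert a D'"
    have "valid U c D"
      unfolding valid_def
    proof (intro conjI ballI)
      show "D \<subseteq> U" using D'U' aU by (auto simp: D_def U'_def)
      fix z assume z: "z \<in> U - D"
      show "dg (U - D) z \<le> c z"
      proof (cases "z = w")
        case True
        have "nb w \<inter> (U - D) \<subseteq> {b}" using nbw by (auto simp: D_def)
        then have "dg (U - D) w \<le> card {b}" by (rule dg_le) simp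
        then show ?thesis using True cw by simp
      next
        case zw: False
        show ?thesis
        proof (cases "z = b")
          case True
          have "nb b \<inter> (U - D) \<subseteq> {w}" using nbb \<open>y = a\<close> by (auto simp: D_def)
          then have "dg (U - D) b \<le> card {w}" by (rule dg_le) simp
          then show ?thesis using True cb by simp
        next
          case zb: False
          have zU': "z \<in> U' - D'" using z zw zb by (auto simp: U'_def D_def)
          have "nb z \<inter> (U - D) \<subseteq> U' - D'"
          proof
            fix t assume t: "t \<in> nb z \<inter> (U - D)"
            have "t \<noteq> w" using wnot[of t z] t zU' by blast
            moreover have "t \<noteq> b"
            proof
              assume "t = b"
              then have "z \<in> nb b \<inter> U" using t z nb_sym by blast
              then show False using nbb zw zU' \<open>y = a\<close> by (auto simp: U'_def)
            qed
            ultimately show "t \<in> U' - D'" using t by (auto simp: U'_def D_def)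
          qed
          then have "dg (U - D) z \<le> dg (U' - D') z" by (rule dg_sub)
          also have "\<dots> \<le> c z" using v' zU' unfolding valid_def by blast
          finally show ?thesis .
        qed
      qed
    qed
    moreover have "card D = card D' + 1"
    proof -
      have "a \<notin> D'" using D'U' by (auto simp: U'_def)
      moreover have "finite D'" using D'U' finU by (auto simp: U'_def intro: finite_subset)
      ultimately show ?thesis unfolding D_def by (rule card_ins[rotated])
    qed
    ultimately show ?thesis using cnt cntU dfU unfolding good_def
      by (intro exI[of _ D]) simp
  qed
qed

end


lemma two_elem_other:
  assumes "card S = 2" "b \<in> S"
  shows "\<exists>a. S = {a, b} \<and> a \<noteq> b"
proof -
  obtain p q where pq: "S = {p, q}" "p \<noteq> q" using assms(1) by (meson card_2_iff)
  show ?thesis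
  proof (cases "b = p")
    case True
    have "S = {q, b}" using pq(1) True by (simp add: insert_commute)
    moreover have "q \<noteq> b" using pq(2) True by simp
    ultimately show ?thesis by blast
  next
    case False
    then have "b = q" using pq assms(2) by simp
    then have "S = {p, b}" "p \<noteq> b" using pq by simp_all
    then show ?thesis by blast
  qed
qed

context cq begin

lemma nb_of_rch:
  assumes "rch E A x y" "x \<noteq> y"
  shows "nb x \<inter> A \<noteq> {}"
proof -
  have "(\<lambda>p q. p \<in> A \<and> q \<in> A \<and> {p,q} \<in> E)\<^sup>*\<^sup>* x y" using assms(1) by (simp only: rch_def)
  then show ?thesis
  proof (cases rule: converse_rtranclpE)
    case base then show ?thesis using assms(2) by simp
  next
    case (step z)
    then have "z \<in> nb x \<inter> A" by (simp add: nb_def)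
    then show ?thesis by blast
  qed
qed

lemma goodw:
  assumes ih: "IH U" and sub: "U \<subseteq> V" and cap: "\<forall>x\<in>U. c x \<le> k"
    and allc: "\<forall>x\<in>U. 1 \<le> c x" and deg2: "\<forall>x\<in>U. 2 \<le> dg U x"
    and w: "w \<in> U" and hv: "c w < dg U w" and dw: "dg U w \<le> 2"
    and b: "b \<in> nb w \<inter> U" and db: "dg U b \<le> 2"
  shows "\<exists>D. good U c D"
proof -
  have "1 \<le> c w" using allc w by blast
  then have cw: "c w = 1" using hv dw by linarith
  have "2 \<le> dg U w" using deg2 w by blast
  then have "dg U w = 2" using dw by linarith
  then have "card (nb w \<inter> U) = 2" unfolding dg_def .
  from two_elem_other[OF this b] obtain a where nbw: "nb w \<inter> U = {a, b}" and ab: "a \<noteq> b" by blast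
  have aU: "a \<in> U" and bU: "b \<in> U" using nbw by blast+
  show ?thesis
  proof (cases "c a < k")
    case True
    have "1 \<le> c b" using allc bU by blast
    then show ?thesis by (rule red4[OF ih sub cap w cw nbw ab True])
  next
    case ca: False
    show ?thesis
    proof (cases "c b < k")
      case True
      have nbw': "nb w \<inter> U = {b, a}" using nbw by (simp add: insert_commute)
      have "1 \<le> c a" using allc aU by blast
      then show ?thesis by (rule red4[OF ih sub cap w cw nbw' ab[symmetric] True])
    next
      case False
      have "c b \<le> k" using cap bU by blast
      then have cbk: "c b = k" using False by linarith
      have "2 \<le> dg U b" using deg2 bU by blast
      then have "dg U b = 2" using db by linarith
      then have "card (nb b \<inter> U) = 2" unfolding dg_def .
      moreover have "w \<in> nb b \<inter> U" using b w nb_sym[of b w] by blast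
      ultimately obtain y where nbb: "nb b \<inter> U = {y, w}" and yw: "y \<noteq> w"
        using two_elem_other[of "nb b \<inter> U" w] by blast
      have nbb': "nb b \<inter> U = {w, y}" using nbb by (simp add: insert_commute)
      have "y \<in> U" using nbb by blast
      then have cy: "1 \<le> c y" using allc by blast
      have cb: "2 \<le> c b" using cbk k2 by simp
      show ?thesis using red5[OF ih sub cap w cw nbw ab nbb' yw[symmetric] cb cy] .
    qed
  qed
qed

lemma Qd:
  assumes sub: "U \<subseteq> V" and x: "x \<in> U" and c: "cn E (U - {x})"
  shows "dg U x \<le> 2"
proof -
  have "nb x \<inter> U = {u. {x,u} \<in> E} \<inter> (U - {x})" using nb_irrefl[of x] by (auto simp: nb_def)
  moreover have "card ({u. {x,u} \<in> E} \<inter> (U - {x})) \<le> 2" using sub c by (intro Q) auto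
  ultimately show ?thesis by (simp add: dg_def)
qed

lemma step:
  assumes ih: "IH U" and sub: "U \<subseteq> V" and ne: "U \<noteq> {}" and cap: "\<forall>x\<in>U. c x \<le> k"
  shows "\<exists>D. good U c D"
proof (cases "\<forall>x\<in>U. dg U x \<le> c x")
  case True then show ?thesis using base[OF ne sub True] by blast
next
  case False
  then obtain w0 where w0U: "w0 \<in> U" and w0h: "c w0 < dg U w0" by (auto simp: not_le)
  have finU: "finite U" using sub fin_sub by blast
  show ?thesis
  proof (cases "cn E U")
    case False
    then obtain u w where u: "u \<in> U" and w: "w \<in> U" and nr: "\<not> rch E U u w" unfolding cn_def by blast
    show ?thesis by (rule red0[OF ih sub cap u w nr])
  next
    case cU: True
    show ?thesis
    proof (cases "\<exists>x\<in>U. c x = 0 \<and> nb x \<inter> U \<noteq> {}")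
      case True
      then obtain x where x: "x \<in> U" and cx: "c x = 0" and nbx: "nb x \<inter> U \<noteq> {}" by blast
      show ?thesis by (rule red1[OF ih sub cap x cx nbx])
    next
      case nz: False
      show ?thesis
      proof (cases "\<exists>x\<in>U. \<exists>y. nb x \<inter> U = {y}")
        case True
        then obtain x y where x: "x \<in> U" and xy: "nb x \<inter> U = {y}" by blast
        have yU: "y \<in> U" and ynb: "y \<in> nb x" using xy by blast+
        have yx: "y \<noteq> x" using ynb nb_irrefl by blast
        have "nb x \<inter> U \<noteq> {}" using xy by simp
        then have "c x \<noteq> 0" using nz x by auto
        then have cx: "dg U x \<le> c x" using xy by (simp add: dg_def)
        have C1: "{x} \<subseteq> U - {y}" using x yx by blast
        have cl: "\<forall>x'\<in>{x}. nb x' \<inter> U \<subseteq> insert y {x}" using xy by blast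
        have nh: "\<forall>x'\<in>{x}. dg U x' \<le> c x'" using cx by blast
        show ?thesis by (rule red6[OF ih sub cap yU C1 _ cl nh]) simp
      next
        case noleaf: False
        have nonempty: "nb x \<inter> U \<noteq> {}" if x: "x \<in> U" for x
        proof (cases "x = w0")
          case True
          then have "dg U x \<noteq> 0" using w0h by simp
          then show ?thesis by (auto simp: dg_def)
        next
          case False
          have "rch E U x w0" using cU x w0U unfolding cn_def by blast
          then show ?thesis using False by (rule nb_of_rch)
        qed
        have allc: "\<forall>x\<in>U. 1 \<le> c x"
        proof
          fix x assume x: "x \<in> U"
          have "c x \<noteq> 0" using nz x nonempty[OF x] by auto
          then show "1 \<le> c x" by simp
        qed
        have deg2: "\<forall>x\<in>U. 2 \<le> dg U x"
        proof
          fix x assume x: "x \<in> U"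
          have f: "finite (nb x \<inter> U)" using fin_nb by blast
          have "card (nb x \<inter> U) \<noteq> 0" using nonempty[OF x] f by simp
          moreover have "card (nb x \<inter> U) \<noteq> 1"
          proof
            assume "card (nb x \<inter> U) = 1"
            then obtain y where "nb x \<inter> U = {y}" using card_1_singletonE by blast
            then show False using noleaf x by blast
          qed
          ultimately show "2 \<le> dg U x" unfolding dg_def by linarith
        qed
        show ?thesis
        proof (cases "\<forall>x\<in>U. cn E (U - {x})")
          case True
          have dw: "dg U w0 \<le> 2" using Qd[OF sub w0U] True w0U by blast
          obtain b where b: "b \<in> nb w0 \<inter> U" using nonempty[OF w0U] by blast
          have bU: "b \<in> U" using b by blast
          have db: "dg U b \<le> 2" using Qd[OF sub bU] True bU by blast
          show ?thesis by (rule goodw[OF ih sub cap allc deg2 w0U w0h dw b db])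
        next
          case False
          then obtain v0 where v0: "v0 \<in> U" and nc0: "\<not> cn E (U - {v0})" by blast
          then obtain d0 where d0: "d0 \<in> U - {v0}" unfolding cn_def by blast
          define P where "P p \<longleftrightarrow> fst p \<in> U \<and> snd p \<in> U - {fst p} \<and> \<not> cn E (U - {fst p})"
            for p :: "'a \<times> 'a"
          define f where "f p = card {t. rch E (U - {fst p}) (snd p) t}" for p :: "'a \<times> 'a"
          have compU: "{t. rch E (U - {v}) d t} \<subseteq> U - {v}" if "d \<in> U - {v}" for v d
          proof
            fix t assume "t \<in> {t. rch E (U - {v}) d t}"
            then have "rch E (U - {v}) d t" by simp
            then show "t \<in> U - {v}" using that by (rule rch_mem)
          qed
          have P0: "P (v0, d0)" using v0 d0 nc0 by (simp add: P_def)
          have bnd: "\<forall>p. P p \<longrightarrow> f p < card U + 1"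
          proof (intro allI impI)
            fix p assume "P p"
            then have "{t. rch E (U - {fst p}) (snd p) t} \<subseteq> U" using compU[of "snd p" "fst p"] by (auto simp: P_def)
            then have "f p \<le> card U" unfolding f_def using finU by (rule card_mono[rotated])
            then show "f p < card U + 1" by simp
          qed
          obtain p where Pp: "P p" and mx: "\<And>q. P q \<Longrightarrow> f q \<le> f p"
            using ex_has_greatest_nat[of P "(v0, d0)" f, OF P0 bnd] by blast
          define v where "v = fst p"
          define d where "d = snd p"
          have vU: "v \<in> U" and dU: "d \<in> U - {v}" and ncv: "\<not> cn E (U - {v})"
            using Pp by (auto simp: P_def v_def d_def)
          define Dset where "Dset = {t. rch E (U - {v}) d t}"
          have fp: "f p = card Dset" by (simp add: f_def Dset_def v_def d_def)
          have DU: "Dset \<subseteq> U - {v}" unfolding Dset_def using compU[OF dU] .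
          obtain c0 where c0: "c0 \<in> U - {v}" and c0D: "c0 \<notin> Dset"
          proof (rule ccontr)
            assume "\<not> thesis"
            then have all: "\<forall>c0 \<in> U - {v}. c0 \<in> Dset" using that by blast
            have "cn E (U - {v})"
            proof (rule cn_hub[where h=d])
              fix u assume "u \<in> U - {v}"
              then have "rch E (U - {v}) d u" using all by (simp add: Dset_def)
              then show "rch E (U - {v}) u d" by (rule rch_sym)
            qed
            then show False using ncv by simp
          qed
          define Cset where "Cset = {t. rch E (U - {v}) c0 t}"
          have CU: "Cset \<subseteq> U - {v}" unfolding Cset_def using compU[OF c0] .
          have c0C: "c0 \<in> Cset" by (simp add: Cset_def)
          have disj: "x \<notin> Dset" if "x \<in> Cset" for x
          proof
            assume "x \<in> Dset"
            then have "rch E (U - {v}) d x" by (simp add: Dset_def)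
            moreover have "rch E (U - {v}) x c0" using that by (simp add: Cset_def rch_sym)
            ultimately have "rch E (U - {v}) d c0" by (rule rch_trans)
            then show False using c0D by (simp add: Dset_def)
          qed
          have ncut: "cn E (U - {x})" if xC: "x \<in> Cset" for x
          proof (rule ccontr)
            assume ncx: "\<not> cn E (U - {x})"
            have xU: "x \<in> U - {v}" using xC CU by blast
            have Pq: "P (x, v)" using xU vU ncx by (auto simp: P_def)
            have xD: "x \<notin> Dset" using disj[OF xC] .
            define K where "K = {t. rch E (U - {x}) v t}"
            have sub1: "insert v Dset \<subseteq> K"
            proof
              fix t assume t: "t \<in> insert v Dset"
              show "t \<in> K"
              proof (cases "t = v")
                case True then show ?thesis by (simp add: K_def)
              next
                case False
                then have tD: "t \<in> Dset" using t by blast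
                have tU: "t \<in> U" using tD DU by blast
                obtain z where z1: "rch E (U - {v}) t z" and z2: "{z, v} \<in> E"
                  using nbr_comp[OF cU vU tU False] by blast
                have "rch E (U - {v}) d t" using tD by (simp add: Dset_def)
                then have dz: "rch E (U - {v}) d z" using z1 by (rule rch_trans)
                have inUx: "s \<in> U - {x}" if "rch E (U - {v}) z s" for s
                proof -
                  have "rch E (U - {v}) d s" using dz that by (rule rch_trans)
                  then have "s \<in> Dset" by (simp add: Dset_def)
                  then show ?thesis using DU xD by blast
                qed
                have zt: "rch E (U - {x}) z t" using rch_restrict[OF rch_sym[OF z1] inUx] .
                have zx: "z \<in> U - {x}" using inUx[OF rch_refl] .
                have vx: "v \<in> U - {x}" using vU xU by blast
                have "{v, z} = {z, v}" by (rule insert_commute)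
                then have vz: "{v, z} \<in> E" using z2 by simp
                have "rch E (U - {x}) v t" using rch_trans[OF rch_edge[OF vx zx vz] zt] .
                then show ?thesis by (simp add: K_def)
              qed
            qed
            have finK: "finite K"
            proof (rule finite_subset[OF _ finU])
              have "v \<in> U - {x}" using vU xU by blast
              then show "K \<subseteq> U" unfolding K_def using compU[of v x] by blast
            qed
            have finD: "finite Dset" using finite_subset[OF DU] finU by blast
            have vD: "v \<notin> Dset" using DU by blast
            have "card (insert v Dset) \<le> card K" using sub1 finK by (rule card_mono[rotated])
            then have "card Dset + 1 \<le> f (x, v)" using finD vD by (simp add: f_def K_def)
            moreover have "f (x, v) \<le> f p" using mx[OF Pq] .
            ultimately show False using fp by simp
          qed
          have dC: "\<forall>x\<in>Cset. dg U x \<le> 2"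
          proof
            fix x assume x: "x \<in> Cset"
            have "x \<in> U" using x CU by blast
            then show "dg U x \<le> 2" using Qd[OF sub _ ncut[OF x]] by blast
          qed
          have clC: "\<forall>x\<in>Cset. nb x \<inter> U \<subseteq> insert v Cset"
          proof (intro ballI subsetI)
            fix x t assume x: "x \<in> Cset" and t: "t \<in> nb x \<inter> U"
            show "t \<in> insert v Cset"
            proof (cases "t = v")
              case True then show ?thesis by simp
            next
              case False
              have xU: "x \<in> U - {v}" using x CU by blast
              have xt: "rch E (U - {v}) x t" using xU t False by (intro rch_edge) (auto simp: nb_def)
              have "rch E (U - {v}) c0 x" using x by (simp add: Cset_def)
              then have "rch E (U - {v}) c0 t" using xt by (rule rch_trans)
              then show ?thesis by (simp add: Cset_def)
            qed
          qed
          show ?thesis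
          proof (cases "\<forall>x\<in>Cset. dg U x \<le> c x")
            case True
            have Cne: "Cset \<noteq> {}" using c0C by blast
            show ?thesis by (rule red6[OF ih sub cap vU CU Cne clC True])
          next
            case False
            then obtain w where wC: "w \<in> Cset" and wh: "c w < dg U w" by (auto simp: not_le)
            have wU: "w \<in> U" using wC CU by blast
            have dw: "dg U w \<le> 2" using dC wC by blast
            have "\<not> (nb w \<inter> U \<subseteq> {v})"
            proof
              assume "nb w \<inter> U \<subseteq> {v}"
              then have "dg U w \<le> card {v}" by (rule dg_le) simp
              moreover have "2 \<le> dg U w" using deg2 wU by blast
              ultimately show False by simp
            qed
            then obtain b where b: "b \<in> nb w \<inter> U" and bv: "b \<noteq> v" by blast
            have bC: "b \<in> Cset" using clC wC b bv by blast
            have db: "dg U b \<le> 2" using dC bC by blast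
            show ?thesis by (rule goodw[OF ih sub cap allc deg2 wU wh dw b db])
          qed
        qed
      qed
    qed
  qed
qed

lemma claim:
  "U \<subseteq> V \<Longrightarrow> U \<noteq> {} \<Longrightarrow> \<forall>x\<in>U. c x \<le> k \<Longrightarrow> \<exists>D. good U c D"
proof (induction "card U" arbitrary: U c rule: less_induct)
  case less
  have "IH U" unfolding IH_def using less.hyps by blast
  then show ?case by (rule step[OF _ less.prems(1,2,3)])
qed

end


lemma arith_final:
  fixes k n d :: nat
  assumes "(k+1) * d + 1 \<le> n"
  shows "k * n div (k+1) + 1 \<le> n - d"
proof -
  define q where "q = k * n div (k+1)"
  have h1: "q * (k+1) \<le> k * n" unfolding q_def by (rule div_times_less_eq_dividend)
  have "(k+1) * (q + d + 1) = q * (k+1) + (k+1) * d + (k+1)" by (simp add: algebra_simps)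
  also have "\<dots> \<le> k * n + (n - 1) + (k + 1)" using h1 assms by linarith
  also have "\<dots> < (k+1) * (n+1)" using assms by (simp add: algebra_simps)
  finally have "(k+1) * (q + d + 1) < (k+1) * (n+1)" .
  then have "q + d + 1 < n + 1" by (rule mult_less_cancel1[THEN iffD1, THEN conjunct2])
  then show ?thesis unfolding q_def by linarith
qed

theorem lemma4p4:
  fixes k :: nat and V :: "'a set" and E :: "'a set set"
  assumes "k \<ge> 2" and "cactus V E"
  shows "alpha_k k V E \<ge> (k * card V) div (k + 1) + 1"
proof -
  have g: "graph V E" using assms(2) by (simp add: cactus_def)
  have finV: "finite V" and Vne: "V \<noteq> {}" and edg: "\<And>e. e \<in> E \<Longrightarrow> e \<subseteq> V \<and> card e = 2"
    using g by (auto simp: graph_def)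
  interpret cq V E k
  proof
    show "finite V" by (rule finV)
    show "\<And>e. e \<in> E \<Longrightarrow> e \<subseteq> V \<and> card e = 2" by (rule edg)
    show "2 \<le> k" by (rule assms(1))
    show "\<And>x A. A \<subseteq> V \<Longrightarrow> x \<notin> A \<Longrightarrow> cn E A \<Longrightarrow> card ({u. {x, u} \<in> E} \<inter> A) \<le> 2"
      by (rule cactus_Q[OF assms(2)])
  qed
  obtain D where gd: "good V (\<lambda>_. k) D" using claim[of V "\<lambda>_. k"] Vne by blast
  have vd: "valid V (\<lambda>_. k) D" and cnt: "(k+1) * card D + 1 \<le> card V + dfc V (\<lambda>_. k)"
    using gd by (simp_all add: good_def)
  have "dfc V (\<lambda>_. k) = 0" by (simp add: dfc_def)
  then have cnt': "(k+1) * card D + 1 \<le> card V" using cnt by simp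
  have DV: "D \<subseteq> V" using vd by (simp add: valid_def)
  define S where "S = V - D"
  have sp: "k_sparse k V E S"
    unfolding k_sparse_def
  proof (intro conjI ballI)
    show "S \<subseteq> V" by (simp add: S_def)
    fix v assume v: "v \<in> S"
    have "{u \<in> S. {v, u} \<in> E} = nb v \<inter> (V - D)" by (auto simp: nb_def S_def)
    then have "card {u \<in> S. {v, u} \<in> E} = dg (V - D) v" by (simp add: dg_def)
    also have "\<dots> \<le> k" using vd v unfolding valid_def S_def by blast
    finally show "card {u \<in> S. {v, u} \<in> E} \<le> k" .
  qed
  have fin: "finite (card ` {S. k_sparse k V E S})"
  proof -
    have "{S. k_sparse k V E S} \<subseteq> Pow V" by (auto simp: k_sparse_def)
    then have "finite {S. k_sparse k V E S}" using finV by (meson finite_Pow_iff finite_subset)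
    then show ?thesis by simp
  qed
  have "card S \<le> alpha_k k V E" unfolding alpha_k_def
    using sp fin by (intro Max_ge) auto
  moreover have "card S = card V - card D" unfolding S_def using DV finV by (simp add: card_Diff_subset finite_subset)
  moreover have "k * card V div (k+1) + 1 \<le> card V - card D" by (rule arith_final[OF cnt'])
  ultimately show ?thesis by simp
qed

end
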